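(* Let $\mathcal{C}\subset\mathbb{R}^n$ be a nonempty compact convex set with Euclidean diameter $D$, let $f$ be continuously differentiable with $\nabla f$ $L$-Lipschitz on $\mathcal{C}$, and assume $f$ is $\rho$-quasar-convex on $\mathcal{C}$ with $\rho\in(0,1]$ (there is $x^\star\in\arg\min_{\mathcal{C}}f$ with $f^\star-f(y)\ge\frac1\rho\langle\nabla f(y),x^\star-y\rangle$ for all $y\in\mathcal{C}$, $f^\star=\min_{\mathcal{C}}f$). Let $\{x^t\}_{t=0}^T$ be generated by the Boosted Stochastic Frank–Wolfe algorithm described in the context. Then for every $t$, $$F_{t+1}\le(1-\rho\eta_t)F_t+2\eta_t\|\Delta^t\|D+\frac L2\eta_t^2D^2,$$ where $F_t=f(x^t)-f^\star$ and $\Delta^t=m^t-\nabla f(x^t)$.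
   Context: Euclidean norms; $D=\max_{x,y\in\mathcal{C}}\|x-y\|$. $\mathrm{lmo}(v)$ denotes a (fixed selection of a) point of $\arg\min_{s\in\mathcal{C}}\langle s,v\rangle$. $\mathrm{align}(d,\hat d)=\frac{\langle d,\hat d\rangle}{\|d\|\|\hat d\|}$ if $\hat d\ne0$, $-1$ if $\hat d=0$. Algorithm: inputs $K\ge1$, $\delta\in(0,1]$, step decays $\eta_t>0$, a vector $m^{\rm init}$; $x^0=\mathrm{lmo}(m^{\rm init})$. At iteration $t$, a (random) estimator $m^t$ of $\nabla f(x^t)$ is formed. Boosting: $\psi^0=0$, $\Lambda_t=0$, $k=0$; while $k\le K-1$: $r^k=-m^t-\psi^k$, $v^k=\mathrm{lmo}(-r^k)$; if $k=0$, $s^t=v^0$; if $\psi^k\ne0$, $u^k$ is whichever of $v^k-x^t$, $-\psi^k/\|\psi^k\|$ has the larger inner product with $r^k$, else $u^k=v^k-x^t$; if $u^k=0$ stop; $\lambda_k=\langle r^k,u^k\rangle/\|u^k\|^2$, $\phi^k=\psi^k+\lambda_ku^k$; if $\mathrm{align}(-m^t,\phi^k)-\mathrm{align}(-m^t,\psi^k)\ge\delta$ then $\psi^{k+1}=\phi^k$, $\Lambda_t\leftarrow\Lambda_t+\lambda_k$ if $u^k=v^k-x^t$ and $\Lambda_t\leftarrow\Lambda_t(1-\lambda_k/\|\psi^k\|)$ otherwise, $k\leftarrow k+1$; else stop. With $\psi$ the last accepted candidate, $\tilde d^t=\psi/\Lambda_t$ if $\Lambda_t\ne0$, else $0$. $\gamma_t=\min\{\eta_t\|s^t-x^t\|/\|\tilde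 d^t\|,1\}$ if $\tilde d^t\ne0$, else $1$. If $\gamma_t<1$: $x^{t+1}=x^t+\gamma_t\tilde d^t$; otherwise $x^{t+1}=x^t+\eta_t(s^t-x^t)$. *)

theory Defs
  imports "HOL-Analysis.Analysis"
begin

definition align :: "'a::real_inner \<Rightarrow> 'a \<Rightarrow> real" where
  "align d dh = (if dh = 0 then -1 else (d \<bullet> dh) / (norm d * norm dh))"

text \<open>Returns None if the loop stops.
  lmo is the (fixed selection of the) linear minimization oracle, xt the current iterate,
  mt the gradient estimator, delta the alignment threshold.\<close>
definition boost_iter ::
  "('a::real_inner \<Rightarrow> 'a) \<Rightarrow> real \<Rightarrow> 'a \<Rightarrow> 'a \<Rightarrow> 'a \<times> real \<Rightarrow> ('a \<times> real) option" where
  "boost_iter lmo delta xt mt st =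
    (let psi = fst st; Lam = snd st;
         r = - mt - psi;
         v = lmo (- r);
         u = (if psi \<noteq> 0
              then (if r \<bullet> (v - xt) \<ge> r \<bullet> (- (inverse (norm psi)) *\<^sub>R psi)
                    then v - xt else - (inverse (norm psi)) *\<^sub>R psi)
              else v - xt)
     in if u = 0 then None
        else (let lam = (r \<bullet> u) / (norm u)^2;
                  phi = psi + lam *\<^sub>R u
              in if align (- mt) phi - align (- mt) psi \<ge> delta
                 then Some (phi, if u = v - xt then Lam + lam else Lam * (1 - lam / norm psi))
                 else None))"

fun boost_loop ::
  "('a::real_inner \<Rightarrow> 'a) \<Rightarrow> real \<Rightarrow> 'a \<Rightarrow> 'a \<Rightarrow> nat \<Rightarrow> 'a \<times> real \<Rightarrow> 'a \<times> real" where
  "boost_loop lmo delta xt mt 0 st = st"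
| "boost_loop lmo delta xt mt (Suc n) st =
     (case boost_iter lmo delta xt mt st of
        None \<Rightarrow> st
      | Some st' \<Rightarrow> boost_loop lmo delta xt mt n st')"

text \<open>One outer step of Boosted Stochastic Frank--Wolfe: from x^t, estimator m^t and
  step decay eta_t, compute x^{t+1}.  s^t = v^0 = lmo(m^t) (since psi^0 = 0).\<close>
definition bsfw_step ::
  "('a::real_inner \<Rightarrow> 'a) \<Rightarrow> nat \<Rightarrow> real \<Rightarrow> real \<Rightarrow> 'a \<Rightarrow> 'a \<Rightarrow> 'a" where
  "bsfw_step lmo K delta eta xt mt =
    (let s = lmo mt;
         st = boost_loop lmo delta xt mt K (0, 0);
         psi = fst st; Lam = snd st;
         dt = (if Lam \<noteq> 0 then (inverse Lam) *\<^sub>R psi else 0);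
         gam = (if dt \<noteq> 0 then min (eta * norm (s - xt) / norm dt) 1 else 1)
     in if gam < 1 then xt + gam *\<^sub>R dt else xt + eta *\<^sub>R (s - xt))"

end

theory Submission
  imports Defs
begin

lemma align_zero[simp]: "align d 0 = -1" by (simp add: align_def)

lemma align_pos_scale:
  fixes d v :: "'a::real_inner"
  assumes "c > 0" shows "align d (c *\<^sub>R v) = align d v"
  using assms by (auto simp: align_def)

lemma align_neg_scale:
  fixes d v :: "'a::real_inner"
  assumes "c < 0" "v \<noteq> 0" shows "align d (c *\<^sub>R v) = - align d v"
  using assms by (auto simp: align_def abs_of_neg)

definition binv :: "'a::euclidean_space set \<Rightarrow> 'a \<Rightarrow> 'a \<Rightarrow> 'a \<Rightarrow> 'a \<times> real \<Rightarrow> bool" where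
  "binv C x m s st \<longleftrightarrow> (fst st = 0 \<and> snd st = 0) \<or>
     (snd st > 0 \<and> fst st \<noteq> 0 \<and> m \<noteq> 0 \<and> s \<noteq> x \<and> x + inverse (snd st) *\<^sub>R fst st \<in> C
      \<and> align (-m) (fst st) \<ge> align (-m) (s - x) \<and> align (-m) (s - x) \<ge> 0)"

lemma iter_inv:
  fixes x m s psi :: "'a::euclidean_space"
  assumes cvx: "convex C" and lmo: "\<forall>v. lmo v \<in> C \<and> (\<forall>s\<in>C. lmo v \<bullet> v \<le> s \<bullet> v)"
    and xC: "x \<in> C" and s: "s = lmo m" and inv: "binv C x m s (psi, Lam)"
    and it: "boost_iter lmo \<delta> x m (psi, Lam) = Some (phi, Lam')" and dl: "\<delta> > 0"
  shows "binv C x m s (phi, Lam')"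
proof -
  define r where "r = -m - psi"
  define v where "v = lmo (-r)"
  define u where "u = (if psi \<noteq> 0 then (if r \<bullet> (v - x) \<ge> r \<bullet> (- (inverse (norm psi)) *\<^sub>R psi) then v - x else - (inverse (norm psi)) *\<^sub>R psi) else v - x)"
  define lam where "lam = (r \<bullet> u) / (norm u)^2"
  have "boost_iter lmo \<delta> x m (psi, Lam) = (if u = 0 then None else if align (-m) (psi + lam *\<^sub>R u) - align (-m) psi \<ge> \<delta> then Some (psi + lam *\<^sub>R u, if u = v - x then Lam + lam else Lam * (1 - lam / norm psi)) else None)"
    unfolding boost_iter_def Let_def fst_conv snd_conv r_def[symmetric] v_def[symmetric] u_def[symmetric] lam_def[symmetric] by (rule refl)
  with it have u0: "u \<noteq> 0" and phi: "phi = psi + lam *\<^sub>R u"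
    and acc: "align (-m) phi - align (-m) psi \<ge> \<delta>"
    and Lam': "Lam' = (if u = v - x then Lam + lam else Lam * (1 - lam / norm psi))"
    by (auto split: if_splits)
  have vC: "v \<in> C" using lmo v_def by blast
  have rv: "r \<bullet> (v - x) \<ge> 0"
  proof -
    have "v \<bullet> (-r) \<le> x \<bullet> (-r)" using lmo xC v_def by blast
    thus ?thesis by (simp add: inner_diff_right inner_commute)
  qed
  have ru: "r \<bullet> u \<ge> 0" using rv by (auto simp: u_def)
  have lam0: "lam \<ge> 0" unfolding lam_def using ru by simp
  show ?thesis
  proof (cases "psi = 0")
    case True
    then have L0: "Lam = 0" using inv by (auto simp: binv_def)
    have r: "r = -m" using True r_def by simp
    have vs: "v = s" using r s v_def by simp
    have u: "u = s - x" using True u_def vs by simp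
    have "align (-m) phi > -1" using acc dl True by simp
    hence phi0: "phi \<noteq> 0" by auto
    hence lampos: "lam > 0" using lam0 phi True by (cases "lam = 0") auto
    have m0: "m \<noteq> 0" using lampos unfolding lam_def r by auto
    have sx: "s \<noteq> x" using u0 u by simp
    have Lam'v: "Lam' = lam" using Lam' u vs L0 by simp
    have phis: "phi = lam *\<^sub>R (s - x)" using phi True u by simp
    have "x + inverse Lam' *\<^sub>R phi = s" using lampos by (simp add: Lam'v phis)
    hence inC: "x + inverse Lam' *\<^sub>R phi \<in> C" using lmo s by simp
    have al: "align (-m) phi = align (-m) (s - x)" using phis lampos align_pos_scale by simp
    have "m \<bullet> s \<le> m \<bullet> x" using lmo xC s by (metis inner_commute)
    hence "(-m) \<bullet> (s - x) \<ge> 0" by (simp add: inner_diff_right)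
    hence "align (-m) (s - x) \<ge> 0" using sx by (auto simp: align_def intro!: divide_nonpos_nonneg)
    thus ?thesis unfolding binv_def using lampos Lam'v phi0 m0 sx inC al by simp
  next
    case False
    then have I: "Lam > 0" "m \<noteq> 0" "s \<noteq> x" "x + inverse Lam *\<^sub>R psi \<in> C"
      "align (-m) psi \<ge> align (-m) (s - x)" "align (-m) (s - x) \<ge> 0"
      using inv by (auto simp: binv_def)
    have alphi: "align (-m) phi > align (-m) psi" using acc dl by simp
    hence phi0: "phi \<noteq> 0" using I by auto
    show ?thesis
    proof (cases "u = v - x")
      case True
      have Lv: "Lam' = Lam + lam" using Lam' True by simp
      have Lp: "Lam' > 0" using Lv I lam0 by simp
      have "Lam' *\<^sub>R (x + inverse Lam' *\<^sub>R phi) = Lam' *\<^sub>R ((Lam / Lam') *\<^sub>R (x + inverse Lam *\<^sub>R psi) + (lam / Lam') *\<^sub>R v)"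
      proof -
        have "Lam' *\<^sub>R (x + inverse Lam' *\<^sub>R phi) = Lam' *\<^sub>R x + phi" using Lp by (simp add: scaleR_add_right)
        also have "\<dots> = Lam *\<^sub>R x + psi + lam *\<^sub>R v" unfolding phi True Lv by (simp add: algebra_simps)
        also have "\<dots> = Lam' *\<^sub>R ((Lam / Lam') *\<^sub>R (x + inverse Lam *\<^sub>R psi) + (lam / Lam') *\<^sub>R v)"
          using Lp I(1) by (simp add: scaleR_add_right)
        finally show ?thesis .
      qed
      hence "x + inverse Lam' *\<^sub>R phi = (Lam / Lam') *\<^sub>R (x + inverse Lam *\<^sub>R psi) + (lam / Lam') *\<^sub>R v"
        using Lp by simp
      moreover have "(Lam / Lam') *\<^sub>R (x + inverse Lam *\<^sub>R psi) + (lam / Lam') *\<^sub>R v \<in> C"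
        using convexD[OF cvx I(4) vC, of "Lam / Lam'" "lam / Lam'"] Lp I(1) lam0 Lv
        by (simp add: add_divide_distrib[symmetric])
      ultimately show ?thesis unfolding binv_def using Lp phi0 I alphi by auto
    next
      case F2: False
      have u: "u = - (inverse (norm psi)) *\<^sub>R psi" using F2 False u_def by (auto split: if_splits)
      define c where "c = 1 - lam / norm psi"
      have phic: "phi = c *\<^sub>R psi" using phi u False by (simp add: c_def algebra_simps divide_inverse)
      have Lc: "Lam' = Lam * c" using Lam' F2 c_def by simp
      have cpos: "c > 0"
      proof (rule ccontr)
        assume "\<not> c > 0"
        moreover have "c \<noteq> 0" using phi0 phic by auto
        ultimately have "c < 0" by simp
        hence "align (-m) phi = - align (-m) psi" using phic align_neg_scale False by simp
        thus False using alphi I by linarith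
      qed
      have Lp: "Lam' > 0" using Lc cpos I by simp
      have "x + inverse Lam' *\<^sub>R phi = x + inverse Lam *\<^sub>R psi" using cpos I(1)
        by (simp add: Lc phic)
      moreover have "align (-m) phi = align (-m) psi" using phic cpos align_pos_scale by simp
      ultimately show ?thesis unfolding binv_def using Lp phi0 I by auto
    qed
  qed
qed

lemma loop_inv:
  fixes x m s :: "'a::euclidean_space"
  assumes cvx: "convex C" and lmo: "\<forall>v. lmo v \<in> C \<and> (\<forall>s\<in>C. lmo v \<bullet> v \<le> s \<bullet> v)"
    and xC: "x \<in> C" and s: "s = lmo m" and dl: "\<delta> > 0"
  shows "binv C x m s st \<Longrightarrow> binv C x m s (boost_loop lmo \<delta> x m n st)"
proof (induction n arbitrary: st)
  case 0
  then show ?case by simp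
next
  case (Suc n)
  show ?case
  proof (cases "boost_iter lmo \<delta> x m st")
    case None
    then show ?thesis using Suc by simp
  next
    case (Some st')
    have "binv C x m s st'"
      using iter_inv[OF cvx lmo xC s, of "fst st" "snd st" \<delta> "fst st'" "snd st'"] Suc.prems Some dl by simp
    then show ?thesis using Suc.IH Some by simp
  qed
qed

lemma step_props:
  fixes x m :: "'a::euclidean_space"
  assumes cvx: "convex C" and lmo: "\<forall>v. lmo v \<in> C \<and> (\<forall>s\<in>C. lmo v \<bullet> v \<le> s \<bullet> v)"
    and xC: "x \<in> C" and dl: "\<delta> > 0" and eta: "0 < eta" "eta \<le> 1"
  shows "bsfw_step lmo K \<delta> eta x m \<in> C \<and> norm (bsfw_step lmo K \<delta> eta x m - x) \<le> eta * norm (lmo m - x)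
     \<and> m \<bullet> (bsfw_step lmo K \<delta> eta x m - x) \<le> eta * (m \<bullet> (lmo m - x))"
proof -
  define s where "s = lmo m"
  define st where "st = boost_loop lmo \<delta> x m K (0, 0)"
  define psi where "psi = fst st"
  define Lam where "Lam = snd st"
  define dt where "dt = (if Lam \<noteq> 0 then (inverse Lam) *\<^sub>R psi else 0)"
  define gam where "gam = (if dt \<noteq> 0 then min (eta * norm (s - x) / norm dt) 1 else 1)"
  have eq: "bsfw_step lmo K \<delta> eta x m = (if gam < 1 then x + gam *\<^sub>R dt else x + eta *\<^sub>R (s - x))"
    unfolding bsfw_step_def Let_def s_def[symmetric] st_def[symmetric] psi_def[symmetric] Lam_def[symmetric]
      dt_def[symmetric] gam_def[symmetric] by (rule refl)
  have sC: "s \<in> C" using lmo s_def by simp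
  have inv: "binv C x m s st" unfolding st_def
    by (rule loop_inv[OF cvx lmo xC s_def dl]) (simp add: binv_def)
  show ?thesis
  proof (cases "gam < 1")
    case True
    then have dt0: "dt \<noteq> 0" using gam_def by auto
    then have L0: "Lam \<noteq> 0" using dt_def by auto
    then have I: "Lam > 0" "psi \<noteq> 0" "m \<noteq> 0" "s \<noteq> x" "x + dt \<in> C"
      "align (-m) psi \<ge> align (-m) (s - x)"
      using inv L0 by (auto simp: binv_def psi_def Lam_def dt_def)
    have g: "gam = eta * norm (s - x) / norm dt" using True dt0 gam_def by auto
    have g0: "gam \<ge> 0" using g eta by simp
    have "x + gam *\<^sub>R dt = (1 - gam) *\<^sub>R x + gam *\<^sub>R (x + dt)" by (simp add: algebra_simps)
    moreover have "(1 - gam) *\<^sub>R x + gam *\<^sub>R (x + dt) \<in> C"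
      using convexD[OF cvx xC I(5), of "1 - gam" gam] g0 True by simp
    ultimately have yC: "x + gam *\<^sub>R dt \<in> C" by simp
    have nrm: "norm (gam *\<^sub>R dt) = eta * norm (s - x)" using g g0 dt0 eta by simp
    have "align (-m) dt = align (-m) psi" using L0 I(1) dt_def align_pos_scale[of "inverse Lam"] by simp
    hence "align (-m) dt \<ge> align (-m) (s - x)" using I by simp
    hence "(-m \<bullet> dt) / (norm m * norm dt) \<ge> (-m \<bullet> (s - x)) / (norm m * norm (s - x))"
      using dt0 I by (simp add: align_def)
    hence "(-m \<bullet> dt) / norm dt \<ge> (-m \<bullet> (s - x)) / norm (s - x)"
    proof -
      assume h: "(-m \<bullet> dt) / (norm m * norm dt) \<ge> (-m \<bullet> (s - x)) / (norm m * norm (s - x))"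
      have "(-m \<bullet> dt) / (norm m * norm dt) = ((-m \<bullet> dt) / norm dt) / norm m"
        by (simp add: mult.commute)
      moreover have "(-m \<bullet> (s - x)) / (norm m * norm (s - x)) = ((-m \<bullet> (s - x)) / norm (s - x)) / norm m"
        by (simp add: mult.commute)
      ultimately show ?thesis using h I(3) divide_le_cancel by (metis zero_less_norm_iff)
    qed
    hence "(m \<bullet> dt) / norm dt \<le> (m \<bullet> (s - x)) / norm (s - x)" by simp
    hence "eta * norm (s - x) * ((m \<bullet> dt) / norm dt) \<le> eta * norm (s - x) * ((m \<bullet> (s - x)) / norm (s - x))"
      using eta by (intro mult_left_mono) auto
    hence ip: "m \<bullet> (gam *\<^sub>R dt) \<le> eta * (m \<bullet> (s - x))" using I(4) g by simp
    show ?thesis unfolding eq using True yC nrm ip s_def by simp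
  next
    case False
    have "x + eta *\<^sub>R (s - x) = (1 - eta) *\<^sub>R x + eta *\<^sub>R s" by (simp add: algebra_simps)
    moreover have "(1 - eta) *\<^sub>R x + eta *\<^sub>R s \<in> C"
      using convexD[OF cvx xC sC, of "1 - eta" eta] eta by simp
    ultimately have "x + eta *\<^sub>R (s - x) \<in> C" by simp
    then show ?thesis unfolding eq using False eta s_def by simp
  qed
qed

lemma descent:
  fixes x y :: "'a::euclidean_space" and f :: "'a \<Rightarrow> real"
  assumes cvx: "convex C" and xC: "x \<in> C" and yC: "y \<in> C"
    and f_deriv: "\<forall>y. (f has_derivative (\<lambda>h. grad y \<bullet> h)) (at y)"
    and grad_lip: "\<forall>y\<in>C. \<forall>z\<in>C. norm (grad y - grad z) \<le> L * norm (y - z)"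
  shows "f y \<le> f x + grad x \<bullet> (y - x) + L / 2 * norm (y - x)^2"
proof -
  define d where "d = y - x"
  define \<phi> where "\<phi> t = f (x + t *\<^sub>R d) - t * (grad x \<bullet> d) - L / 2 * t^2 * norm d ^ 2" for t
  have "\<phi> 1 \<le> \<phi> 0"
  proof (rule DERIV_nonpos_imp_nonincreasing[of 0 1 \<phi>])
    show "(0::real) \<le> 1" by simp
    fix t :: real assume t0: "0 \<le> t" and t1: "t \<le> 1"
    have t: "0 \<le> t \<and> t \<le> 1" using t0 t1 by simp
    define z where "z = x + t *\<^sub>R d"
    have "z = (1 - t) *\<^sub>R x + t *\<^sub>R y" unfolding z_def d_def by (simp add: algebra_simps)
    hence zC: "z \<in> C" using convexD[OF cvx xC yC, of "1 - t" t] t by simp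
    have l: "((\<lambda>t. x + t *\<^sub>R d) has_derivative (\<lambda>h. h *\<^sub>R d)) (at t)"
      by (auto intro!: derivative_eq_intros)
    have "((\<lambda>t. f (x + t *\<^sub>R d)) has_derivative (\<lambda>h. grad z \<bullet> (h *\<^sub>R d))) (at t)"
      using has_derivative_compose[OF l, of f "\<lambda>h. grad z \<bullet> h"] f_deriv z_def by simp
    moreover have "(\<lambda>h. grad z \<bullet> (h *\<^sub>R d)) = (*) (grad z \<bullet> d)" by (auto simp: mult.commute)
    ultimately have D1: "((\<lambda>t. f (x + t *\<^sub>R d)) has_real_derivative (grad z \<bullet> d)) (at t)"
      by (simp add: has_field_derivative_def)
    have D: "(\<phi> has_real_derivative (grad z \<bullet> d - grad x \<bullet> d - L / 2 * (2 * t) * norm d ^ 2)) (at t)"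
      unfolding \<phi>_def by (auto intro!: derivative_eq_intros D1)
    have "grad z \<bullet> d - grad x \<bullet> d = (grad z - grad x) \<bullet> d" by (simp add: inner_diff_left)
    also have "\<dots> \<le> norm (grad z - grad x) * norm d" by (rule norm_cauchy_schwarz)
    also have "\<dots> \<le> (L * norm (z - x)) * norm d" using grad_lip zC xC by (intro mult_right_mono) auto
    also have "\<dots> = L * t * norm d ^ 2" using t unfolding z_def by (simp add: power2_eq_square)
    finally show "\<exists>y. (\<phi> has_real_derivative y) (at t) \<and> y \<le> 0" using D by (intro exI[of _ "grad z \<bullet> d - grad x \<bullet> d - L / 2 * (2 * t) * norm d ^ 2"]) auto
  qed
  thus ?thesis unfolding \<phi>_def d_def by simp
qed

theorem theorem13:
  fixes C :: "'a::euclidean_space set"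
    and f :: "'a \<Rightarrow> real" and grad :: "'a \<Rightarrow> 'a"
    and L \<rho> \<delta> :: real and K :: nat and \<eta> :: "nat \<Rightarrow> real"
    and lmo :: "'a \<Rightarrow> 'a" and minit :: 'a and m x :: "nat \<Rightarrow> 'a"
  assumes C_ne: "C \<noteq> {}" and C_compact: "compact C" and C_convex: "convex C"
    and f_deriv: "\<forall>y. (f has_derivative (\<lambda>h. grad y \<bullet> h)) (at y)"
    and grad_cont: "continuous_on UNIV grad"
    and grad_lip: "\<forall>y\<in>C. \<forall>z\<in>C. norm (grad y - grad z) \<le> L * norm (y - z)"
    and rho: "0 < \<rho>" "\<rho> \<le> 1"
    and quasar: "\<exists>xs\<in>C. (\<forall>y\<in>C. f xs \<le> f y) \<and>
                   (\<forall>y\<in>C. (INF z\<in>C. f z) - f y \<ge> (1 / \<rho>) * (grad y \<bullet> (xs - y)))"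
    and lmo: "\<forall>v. lmo v \<in> C \<and> (\<forall>s\<in>C. lmo v \<bullet> v \<le> s \<bullet> v)"
    and K: "K \<ge> 1" and delta: "0 < \<delta>" "\<delta> \<le> 1"
    and eta: "\<forall>t. 0 < \<eta> t \<and> \<eta> t \<le> 1"
    and x0: "x 0 = lmo minit"
    and xstep: "\<forall>t. x (Suc t) = bsfw_step lmo K \<delta> (\<eta> t) (x t) (m t)"
  shows "\<forall>t. f (x (Suc t)) - (INF z\<in>C. f z)
            \<le> (1 - \<rho> * \<eta> t) * (f (x t) - (INF z\<in>C. f z))
              + 2 * \<eta> t * norm (m t - grad (x t)) * diameter C
              + L / 2 * (\<eta> t)^2 * (diameter C)^2"
proof
  fix t
  obtain xs where xsC: "xs \<in> C" and xsmin: "\<forall>y\<in>C. f xs \<le> f y"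
    and qs: "\<forall>y\<in>C. (INF z\<in>C. f z) - f y \<ge> (1 / \<rho>) * (grad y \<bullet> (xs - y))"
    using quasar by blast
  have fs: "(INF z\<in>C. f z) = f xs"
    by (rule cInf_eq_minimum) (use xsC xsmin in auto)
  have xC: "x n \<in> C" for n
  proof (induction n)
    case 0 then show ?case using x0 lmo by simp
  next
    case (Suc n) then show ?case using xstep step_props[OF C_convex lmo Suc delta(1), of "\<eta> n" K "m n"] eta by simp
  qed
  define xt where "xt = x t"
  define y where "y = x (Suc t)"
  define s where "s = lmo (m t)"
  define g where "g = grad xt"
  define mt where "mt = m t"
  define e where "e = \<eta> t"
  define D where "D = diameter C"
  define \<Delta> where "\<Delta> = norm (mt - g)"
  define F where "F = f xt - f xs"
  have e: "0 < e" "e \<le> 1" using eta e_def by auto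
  have bC: "bounded C" using C_compact compact_imp_bounded by blast
  have dist: "norm (a - b) \<le> D" if "a \<in> C" "b \<in> C" for a b
    using diameter_bounded_bound[OF bC that] D_def by (simp add: dist_norm)
  have xtC: "xt \<in> C" using xC xt_def by simp
  have sC: "s \<in> C" using lmo s_def by simp
  have sp: "y \<in> C" "norm (y - xt) \<le> e * norm (s - xt)" "mt \<bullet> (y - xt) \<le> e * (mt \<bullet> (s - xt))"
    using step_props[OF C_convex lmo xtC delta(1) e, of K mt] xstep
    unfolding y_def xt_def s_def mt_def e_def by auto
  have nyD: "norm (y - xt) \<le> e * D"
    using sp(2) dist[OF sC xtC] e by (meson mult_left_mono less_imp_le order_trans)
  have desc: "f y \<le> f xt + g \<bullet> (y - xt) + L / 2 * norm (y - xt)^2"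
    unfolding g_def by (rule descent[OF C_convex xtC sp(1) f_deriv grad_lip])
  have h1: "g \<bullet> (y - xt) \<le> mt \<bullet> (y - xt) + \<Delta> * (e * D)"
  proof -
    have "g \<bullet> (y - xt) = mt \<bullet> (y - xt) + (g - mt) \<bullet> (y - xt)" by (simp add: inner_diff_left)
    also have "(g - mt) \<bullet> (y - xt) \<le> norm (g - mt) * norm (y - xt)" by (rule norm_cauchy_schwarz)
    also have "\<dots> \<le> \<Delta> * (e * D)" unfolding \<Delta>_def using nyD by (simp add: norm_minus_commute mult_left_mono)
    finally show ?thesis by simp
  qed
  have h2: "mt \<bullet> (s - xt) \<le> mt \<bullet> (xs - xt)"
  proof -
    have "s \<bullet> mt \<le> xs \<bullet> mt" using lmo xsC s_def mt_def by blast
    thus ?thesis by (simp add: inner_diff_right inner_commute)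
  qed
  have h3: "mt \<bullet> (xs - xt) \<le> g \<bullet> (xs - xt) + \<Delta> * D"
  proof -
    have "mt \<bullet> (xs - xt) = g \<bullet> (xs - xt) + (mt - g) \<bullet> (xs - xt)" by (simp add: inner_diff_left)
    also have "(mt - g) \<bullet> (xs - xt) \<le> norm (mt - g) * norm (xs - xt)" by (rule norm_cauchy_schwarz)
    also have "\<dots> \<le> \<Delta> * D" unfolding \<Delta>_def using dist[OF xsC xtC] by (simp add: mult_left_mono)
    finally show ?thesis by simp
  qed
  have h4: "g \<bullet> (xs - xt) \<le> - \<rho> * F"
  proof -
    have "f xs - f xt \<ge> (1 / \<rho>) * (g \<bullet> (xs - xt))" using qs xtC fs g_def by auto
    hence "\<rho> * (f xs - f xt) \<ge> \<rho> * ((1 / \<rho>) * (g \<bullet> (xs - xt)))" using rho by (intro mult_left_mono) auto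
    thus ?thesis using rho unfolding F_def by (simp add: algebra_simps)
  qed
  have h5: "L / 2 * norm (y - xt)^2 \<le> L / 2 * e^2 * D^2"
  proof (cases "L \<ge> 0")
    case True
    have "norm (y - xt)^2 \<le> (e * D)^2" using nyD by (intro power_mono) auto
    hence "L / 2 * norm (y - xt)^2 \<le> L / 2 * (e * D)^2" using True by (intro mult_left_mono) auto
    thus ?thesis by (simp add: power_mult_distrib mult.assoc)
  next
    case False
    have "a = b" if "a \<in> C" "b \<in> C" for a b
    proof -
      have "0 \<le> L * norm (a - b)" using grad_lip that by (meson norm_ge_zero order_trans)
      hence "norm (a - b) \<le> 0" using False by (simp add: zero_le_mult_iff)
      thus ?thesis by simp
    qed
    hence "C = {xt}" using xtC by blast
    hence "D = 0" "y = xt" using D_def sp(1) by auto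
    thus ?thesis by simp
  qed
  have "e * (mt \<bullet> (s - xt)) \<le> e * (- \<rho> * F + \<Delta> * D)" using h2 h3 h4 e by (intro mult_left_mono) auto
  hence "f y - f xs \<le> (1 - \<rho> * e) * F + 2 * e * \<Delta> * D + L / 2 * e^2 * D^2"
    using desc h1 h5 sp(3) unfolding F_def by (simp add: algebra_simps)
  thus "f (x (Suc t)) - (INF z\<in>C. f z)
            \<le> (1 - \<rho> * \<eta> t) * (f (x t) - (INF z\<in>C. f z))
              + 2 * \<eta> t * norm (m t - grad (x t)) * diameter C
              + L / 2 * (\<eta> t)^2 * (diameter C)^2"
    unfolding fs y_def F_def e_def \<Delta>_def D_def mt_def g_def xt_def by simp
qed

end
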